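(* Let $k$ be an algebraically closed field, $\Lambda$ a connected locally bounded $k$-category, and $G$ a group of $k$-linear automorphisms of $\Lambda$ which acts freely on $[\mathrm{ind}\Lambda]$. Let $L$ be a line in $\Lambda$ and $B_L$ its associated $\Lambda$-module. Then $G_L=G_{B_L}$.
   Context: A locally bounded $k$-category: endomorphism algebras local, distinct objects non-isomorphic, and for each object $x$, $\sum_y\dim_k\Lambda(x,y)<\infty$, $\sum_y\dim_k\Lambda(y,x)<\infty$. A $\Lambda$-module is a contravariant $k$-linear functor $\Lambda\to\mathrm{MOD}\,k$; $\mathrm{supp}M$ is the full subcategory of objects $x$ with $M(x)\neq0$. $[\mathrm{ind}\Lambda]$ is the set of isomorphism classes of finite dimensional indecomposable $\Lambda$-modules; for $g\in G$, ${}^gM=M\circ g^{-1}$; $G$ acts freely on $[\mathrm{ind}\Lambda]$ if ${}^gM\not\cong M$ for every indecomposable finite dimensional $M$ and $1\neq g\in G$. A full subcategory $L$ is convex if each path in the ordinary quiver of $\Lambda$ with source and terminal in $L$ has all its points in $L$. A line is a convex full subcategory isomorphic to the path category of a linear quiver (of type $A_n$, $A_\infty$ or $A_\infty^\infty$). For a line $L$, $B_L$ is the $\Lambda$-module with $B_L(x)=k$ for $x\in L$, $B_L(\alpha)\neq0$ for every nonzero morphism $\alpha$ of $L$, and $B_L(x)=0$ for $x\notin L$ (unique up to isomorphism). $G_L=\{g\in G\mid gL=L\}$ and $G_M=\{g\in G\mid {}^gM\cong M\}$. *)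

theory Defs
  imports Main "HOL-Library.Function_Algebras" "HOL-Computational_Algebra.Polynomial"
begin

text \<open>All hom-spaces are subspaces of one
ambient k-vector space of type 'm with scalar multiplication sc.
Hom x y is the space of morphisms from x to y; cmp x y z b a is the composite
b after a, for a in Hom x y and b in Hom y z; idm x is the identity of x.\<close>

record ('k::field, 'o, 'm::ab_group_add) kcat =
  sc  :: "'k \<Rightarrow> 'm \<Rightarrow> 'm"
  Hom :: "'o \<Rightarrow> 'o \<Rightarrow> 'm set"
  cmp :: "'o \<Rightarrow> 'o \<Rightarrow> 'o \<Rightarrow> 'm \<Rightarrow> 'm \<Rightarrow> 'm"
  idm :: "'o \<Rightarrow> 'm"

definition linear_on ::
  "('k::field \<Rightarrow> 'a::ab_group_add \<Rightarrow> 'a) \<Rightarrow> ('k \<Rightarrow> 'b::ab_group_add \<Rightarrow> 'b) \<Rightarrow> 'a set \<Rightarrow> 'b set \<Rightarrow> ('a \<Rightarrow> 'b) \<Rightarrow> bool" where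
  "linear_on s1 s2 S T f \<longleftrightarrow> f ` S \<subseteq> T \<and>
     (\<forall>u\<in>S. \<forall>v\<in>S. f (u + v) = f u + f v) \<and> (\<forall>c. \<forall>u\<in>S. f (s1 c u) = s2 c (f u))"

definition is_kcat :: "('k::field, 'o, 'm::ab_group_add) kcat \<Rightarrow> bool" where
  "is_kcat C \<longleftrightarrow> vector_space (sc C) \<and>
     (\<forall>x y. module.subspace (sc C) (Hom C x y)) \<and>
     (\<forall>x. idm C x \<in> Hom C x x) \<and>
     (\<forall>x y z. \<forall>a\<in>Hom C x y. \<forall>b\<in>Hom C y z. cmp C x y z b a \<in> Hom C x z) \<and>
     (\<forall>x y z. \<forall>a\<in>Hom C x y. linear_on (sc C) (sc C) (Hom C y z) (Hom C x z) (\<lambda>b. cmp C x y z b a)) \<and>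
     (\<forall>x y z. \<forall>b\<in>Hom C y z. linear_on (sc C) (sc C) (Hom C x y) (Hom C x z) (\<lambda>a. cmp C x y z b a)) \<and>
     (\<forall>w x y z. \<forall>a\<in>Hom C w x. \<forall>b\<in>Hom C x y. \<forall>c\<in>Hom C y z.
        cmp C w y z c (cmp C w x y b a) = cmp C w x z (cmp C x y z c b) a) \<and>
     (\<forall>x y. \<forall>a\<in>Hom C x y. cmp C x y y (idm C y) a = a \<and> cmp C x x y a (idm C x) = a)"

definition iso_mor :: "('k::field, 'o, 'm::ab_group_add) kcat \<Rightarrow> 'o \<Rightarrow> 'o \<Rightarrow> 'm \<Rightarrow> bool" where
  "iso_mor C x y a \<longleftrightarrow> a \<in> Hom C x y \<and>
     (\<exists>b\<in>Hom C y x. cmp C x y x b a = idm C x \<and> cmp C y x y a b = idm C y)"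

text \<open>End(x) is a local algebra: it is nonzero and the non-invertible elements are closed under sums.\<close>
definition local_end :: "('k::field, 'o, 'm::ab_group_add) kcat \<Rightarrow> 'o \<Rightarrow> bool" where
  "local_end C x \<longleftrightarrow> idm C x \<noteq> 0 \<and>
     (\<forall>a\<in>Hom C x x. \<forall>b\<in>Hom C x x. \<not> iso_mor C x x a \<and> \<not> iso_mor C x x b \<longrightarrow> \<not> iso_mor C x x (a + b))"

definition finite_dim_sp :: "('k::field \<Rightarrow> 'a::ab_group_add \<Rightarrow> 'a) \<Rightarrow> 'a set \<Rightarrow> bool" where
  "finite_dim_sp s S \<longleftrightarrow> (\<exists>B. finite B \<and> module.span s B = S)"

text \<open>The condition that the sums of dimensions are finite is written out as: only finitely
many nonzero hom-spaces from/to each object, each of them finite dimensional.\<close>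
definition locally_bounded :: "('k::field, 'o, 'm::ab_group_add) kcat \<Rightarrow> bool" where
  "locally_bounded C \<longleftrightarrow> is_kcat C \<and>
     (\<forall>x. local_end C x) \<and>
     (\<forall>x y. x \<noteq> y \<longrightarrow> \<not> (\<exists>a. iso_mor C x y a)) \<and>
     (\<forall>x. finite {y. Hom C x y \<noteq> {0}} \<and> finite {y. Hom C y x \<noteq> {0}}) \<and>
     (\<forall>x y. finite_dim_sp (sc C) (Hom C x y))"

definition connected_cat :: "('k::field, 'o, 'm::ab_group_add) kcat \<Rightarrow> bool" where
  "connected_cat C \<longleftrightarrow>
     (let R = {(x, y). Hom C x y \<noteq> {0}} in \<forall>x y. (x, y) \<in> (R \<union> R\<inverse>)\<^sup>*)"

definition rad :: "('k::field, 'o, 'm::ab_group_add) kcat \<Rightarrow> 'o \<Rightarrow> 'o \<Rightarrow> 'm set" where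
  "rad C x y = {a \<in> Hom C x y. \<forall>b\<in>Hom C y x. iso_mor C x x (idm C x - cmp C x y x b a)}"

definition rad2 :: "('k::field, 'o, 'm::ab_group_add) kcat \<Rightarrow> 'o \<Rightarrow> 'o \<Rightarrow> 'm set" where
  "rad2 C x y = module.span (sc C) {cmp C x z y b a | z a b. a \<in> rad C x z \<and> b \<in> rad C z y}"

text \<open>There is an arrow x to y in the ordinary quiver iff dim rad(x,y)/rad^2(x,y) > 0.\<close>
definition quiver_arrow :: "('k::field, 'o, 'm::ab_group_add) kcat \<Rightarrow> 'o \<Rightarrow> 'o \<Rightarrow> bool" where
  "quiver_arrow C x y \<longleftrightarrow> rad2 C x y \<noteq> rad C x y"

definition convex :: "('k::field, 'o, 'm::ab_group_add) kcat \<Rightarrow> 'o set \<Rightarrow> bool" where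
  "convex C L \<longleftrightarrow> (\<forall>ps. ps \<noteq> [] \<and> (\<forall>i. Suc i < length ps \<longrightarrow> quiver_arrow C (ps ! i) (ps ! Suc i))
      \<and> hd ps \<in> L \<and> last ps \<in> L \<longrightarrow> set ps \<subseteq> L)"

text \<open>Linear quivers: vertex set {0..<n} (n \<ge> 1, type A_n), {0..} (A_infinity) or all
integers (A_infinity^infinity); the edge between t and t+1 points from t to t+1 iff ori t.\<close>
definition linear_index :: "int set \<Rightarrow> bool" where
  "linear_index I \<longleftrightarrow> (\<exists>n::nat. n \<ge> 1 \<and> I = {0..<int n}) \<or> I = {0..} \<or> I = UNIV"

definition lq_path :: "(int \<Rightarrow> bool) \<Rightarrow> int \<Rightarrow> int \<Rightarrow> bool" where
  "lq_path ori i j \<longleftrightarrow> (i \<le> j \<and> (\<forall>t. i \<le> t \<and> t < j \<longrightarrow> ori t)) \<or> (j \<le> i \<and> (\<forall>t. j \<le> t \<and> t < i \<longrightarrow> \<not> ori t))"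

text \<open>Hom-spaces of the path category kQ of the linear quiver: k (spanned by the unique path)
if there is a path from i to j, zero otherwise; composition is multiplication of coefficients.\<close>
definition kQhom :: "(int \<Rightarrow> bool) \<Rightarrow> int \<Rightarrow> int \<Rightarrow> 'k::field set" where
  "kQhom ori i j = (if lq_path ori i j then UNIV else {0})"

text \<open>The full subcategory on L is isomorphic (as k-category) to the path category of a
linear quiver: phi is the bijection on objects, F i j the linear isomorphisms on hom-spaces.\<close>
definition is_line :: "('k::field, 'o, 'm::ab_group_add) kcat \<Rightarrow> 'o set \<Rightarrow> bool" where
  "is_line C L \<longleftrightarrow> convex C L \<and>
     (\<exists>I ori (phi :: int \<Rightarrow> 'o) (F :: int \<Rightarrow> int \<Rightarrow> 'k \<Rightarrow> 'm).
        linear_index I \<and> bij_betw phi I L \<and>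
        (\<forall>i\<in>I. \<forall>j\<in>I. linear_on (*) (sc C) (kQhom ori i j) (Hom C (phi i) (phi j)) (F i j) \<and>
                       bij_betw (F i j) (kQhom ori i j) (Hom C (phi i) (phi j))) \<and>
        (\<forall>i\<in>I. \<forall>j\<in>I. \<forall>l\<in>I. \<forall>c\<in>kQhom ori i j. \<forall>d\<in>kQhom ori j l.
            F i l (d * c) = cmp C (phi i) (phi j) (phi l) (F j l d) (F i j c)) \<and>
        (\<forall>i\<in>I. F i i 1 = idm C (phi i)))"

text \<open>A (right) module: a contravariant k-linear functor; Mob x is the space M(x) and
Mmap x y a : M(y) \<rightarrow> M(x) is M(a) for a in Hom x y.\<close>
record ('o, 'm, 'w) kmod =
  Mob  :: "'o \<Rightarrow> 'w set"
  Mmap :: "'o \<Rightarrow> 'o \<Rightarrow> 'm \<Rightarrow> 'w \<Rightarrow> 'w"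

definition is_module :: "('k::field, 'o, 'm::ab_group_add) kcat \<Rightarrow> ('k::field \<Rightarrow> 'w::ab_group_add \<Rightarrow> 'w) \<Rightarrow> ('o, 'm, 'w) kmod \<Rightarrow> bool" where
  "is_module C sw M \<longleftrightarrow>
     (\<forall>x. module.subspace sw (Mob M x)) \<and>
     (\<forall>x y. \<forall>a\<in>Hom C x y. linear_on sw sw (Mob M y) (Mob M x) (Mmap M x y a)) \<and>
     (\<forall>x y. \<forall>v\<in>Mob M y. linear_on (sc C) sw (Hom C x y) (Mob M x) (\<lambda>a. Mmap M x y a v)) \<and>
     (\<forall>x. \<forall>v\<in>Mob M x. Mmap M x x (idm C x) v = v) \<and>
     (\<forall>x y z. \<forall>a\<in>Hom C x y. \<forall>b\<in>Hom C y z. \<forall>v\<in>Mob M z.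
        Mmap M x z (cmp C x y z b a) v = Mmap M x y a (Mmap M y z b v))"

definition fin_dim_mod :: "('k::field \<Rightarrow> 'w::ab_group_add \<Rightarrow> 'w) \<Rightarrow> ('o, 'm, 'w) kmod \<Rightarrow> bool" where
  "fin_dim_mod sw M \<longleftrightarrow> finite {x. Mob M x \<noteq> {0}} \<and> (\<forall>x. finite_dim_sp sw (Mob M x))"

definition submodule :: "('k::field, 'o, 'm::ab_group_add) kcat \<Rightarrow> ('k::field \<Rightarrow> 'w::ab_group_add \<Rightarrow> 'w) \<Rightarrow> ('o, 'm, 'w) kmod \<Rightarrow> ('o \<Rightarrow> 'w set) \<Rightarrow> bool" where
  "submodule C sw M U \<longleftrightarrow> (\<forall>x. module.subspace sw (U x) \<and> U x \<subseteq> Mob M x) \<and>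
     (\<forall>x y. \<forall>a\<in>Hom C x y. \<forall>v\<in>U y. Mmap M x y a v \<in> U x)"

definition indecomposable :: "('k::field, 'o, 'm::ab_group_add) kcat \<Rightarrow> ('k::field \<Rightarrow> 'w::ab_group_add \<Rightarrow> 'w) \<Rightarrow> ('o, 'm, 'w) kmod \<Rightarrow> bool" where
  "indecomposable C sw M \<longleftrightarrow> (\<exists>x. Mob M x \<noteq> {0}) \<and>
     (\<forall>U V. submodule C sw M U \<and> submodule C sw M V \<and>
        (\<forall>x. U x \<inter> V x = {0} \<and> {u + v | u v. u \<in> U x \<and> v \<in> V x} = Mob M x)
        \<longrightarrow> (\<forall>x. U x = {0}) \<or> (\<forall>x. V x = {0}))"

definition mod_iso :: "('k::field, 'o, 'm::ab_group_add) kcat \<Rightarrow> ('k::field \<Rightarrow> 'w::ab_group_add \<Rightarrow> 'w) \<Rightarrow> ('o, 'm, 'w) kmod \<Rightarrow> ('o, 'm, 'w) kmod \<Rightarrow> bool" where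
  "mod_iso C sw M N \<longleftrightarrow> (\<exists>f. (\<forall>x. linear_on sw sw (Mob M x) (Mob N x) (f x) \<and> bij_betw (f x) (Mob M x) (Mob N x)) \<and>
     (\<forall>x y. \<forall>a\<in>Hom C x y. \<forall>v\<in>Mob M y. f x (Mmap M x y a v) = Mmap N x y a (f y v)))"

text \<open>Concrete ambient space for module values: k^(N) realised inside nat \<Rightarrow> k.
Every (finite or countable dimensional) k-vector space is isomorphic to a subspace of it.\<close>
definition fscale :: "'k::field \<Rightarrow> (nat \<Rightarrow> 'k) \<Rightarrow> (nat \<Rightarrow> 'k)" where
  "fscale c f = (\<lambda>n. c * f n)"

type_synonym ('o, 'm) aut = "('o \<Rightarrow> 'o) \<times> ('o \<Rightarrow> 'o \<Rightarrow> 'm \<Rightarrow> 'm)"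

definition is_aut :: "('k::field, 'o, 'm::ab_group_add) kcat \<Rightarrow> ('o, 'm) aut \<Rightarrow> bool" where
  "is_aut C g \<longleftrightarrow> bij (fst g) \<and>
     (\<forall>x y. linear_on (sc C) (sc C) (Hom C x y) (Hom C (fst g x) (fst g y)) (snd g x y) \<and>
            bij_betw (snd g x y) (Hom C x y) (Hom C (fst g x) (fst g y))) \<and>
     (\<forall>x y z. \<forall>a\<in>Hom C x y. \<forall>b\<in>Hom C y z.
        snd g x z (cmp C x y z b a) = cmp C (fst g x) (fst g y) (fst g z) (snd g y z b) (snd g x y a)) \<and>
     (\<forall>x. snd g x x (idm C x) = idm C (fst g x))"

definition aut_id :: "('o, 'm) aut" where
  "aut_id = (id, \<lambda>x y a. a)"

definition aut_comp :: "('o, 'm) aut \<Rightarrow> ('o, 'm) aut \<Rightarrow> ('o, 'm) aut" where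
  "aut_comp g h = (fst g \<circ> fst h, \<lambda>x y a. snd g (fst h x) (fst h y) (snd h x y a))"

text \<open>Equality of functors (values on non-morphisms are irrelevant).\<close>
definition aut_eq :: "('k::field, 'o, 'm::ab_group_add) kcat \<Rightarrow> ('o, 'm) aut \<Rightarrow> ('o, 'm) aut \<Rightarrow> bool" where
  "aut_eq C g h \<longleftrightarrow> fst g = fst h \<and> (\<forall>x y. \<forall>a\<in>Hom C x y. snd g x y a = snd h x y a)"

definition aut_group :: "('k::field, 'o, 'm::ab_group_add) kcat \<Rightarrow> ('o, 'm) aut set \<Rightarrow> bool" where
  "aut_group C G \<longleftrightarrow> (\<forall>g\<in>G. is_aut C g) \<and> (\<exists>e\<in>G. aut_eq C e aut_id) \<and>
     (\<forall>g\<in>G. \<forall>h\<in>G. \<exists>c\<in>G. aut_eq C c (aut_comp g h)) \<and>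
     (\<forall>g\<in>G. \<exists>h\<in>G. aut_eq C (aut_comp g h) aut_id)"

text \<open>The twisted module gM = M \<circ> g^{-1}.\<close>
definition twist :: "('k::field, 'o, 'm::ab_group_add) kcat \<Rightarrow> ('o, 'm) aut \<Rightarrow> ('o, 'm, 'w) kmod \<Rightarrow> ('o, 'm, 'w) kmod" where
  "twist C g M = \<lparr> Mob = (\<lambda>x. Mob M (inv (fst g) x)),
     Mmap = (\<lambda>x y a. Mmap M (inv (fst g) x) (inv (fst g) y)
                (inv_into (Hom C (inv (fst g) x) (inv (fst g) y)) (snd g (inv (fst g) x) (inv (fst g) y)) a)) \<rparr>"

definition acts_freely :: "('k::field, 'o, 'm::ab_group_add) kcat \<Rightarrow> ('o, 'm) aut set \<Rightarrow> bool" where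
  "acts_freely C G \<longleftrightarrow> (\<forall>M :: ('o, 'm, nat \<Rightarrow> 'k) kmod.
     is_module C fscale M \<and> fin_dim_mod fscale M \<and> indecomposable C fscale M \<longrightarrow>
     (\<forall>g\<in>G. \<not> aut_eq C g aut_id \<longrightarrow> \<not> mod_iso C fscale (twist C g M) M))"

definition stab_set :: "('o, 'm) aut set \<Rightarrow> 'o set \<Rightarrow> ('o, 'm) aut set" where
  "stab_set G L = {g \<in> G. fst g ` L = L}"

definition stab_mod :: "('k::field, 'o, 'm::ab_group_add) kcat \<Rightarrow> ('k::field \<Rightarrow> 'w::ab_group_add \<Rightarrow> 'w) \<Rightarrow> ('o, 'm) aut set \<Rightarrow> ('o, 'm, 'w) kmod \<Rightarrow> ('o, 'm) aut set" where
  "stab_mod C sw G M = {g \<in> G. mod_iso C sw (twist C g M) M}"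

definition is_BL :: "('k::field, 'o, 'm::ab_group_add) kcat \<Rightarrow> ('k::field \<Rightarrow> 'w::ab_group_add \<Rightarrow> 'w) \<Rightarrow> 'o set \<Rightarrow> ('o, 'm, 'w) kmod \<Rightarrow> bool" where
  "is_BL C sw L M \<longleftrightarrow> is_module C sw M \<and>
     (\<forall>x\<in>L. \<exists>v. v \<noteq> 0 \<and> Mob M x = module.span sw {v}) \<and>
     (\<forall>x. x \<notin> L \<longrightarrow> Mob M x = {0}) \<and>
     (\<forall>x\<in>L. \<forall>y\<in>L. \<forall>a\<in>Hom C x y. a \<noteq> 0 \<longrightarrow> (\<exists>v\<in>Mob M y. Mmap M x y a v \<noteq> 0))"

end

theory Submission
  imports Defs
begin


lemma kcat_idm: "is_kcat C \<Longrightarrow> idm C x \<in> Hom C x x"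
  unfolding is_kcat_def by simp
lemma kcat_cmp: "is_kcat C \<Longrightarrow> a \<in> Hom C x y \<Longrightarrow> b \<in> Hom C y z \<Longrightarrow> cmp C x y z b a \<in> Hom C x z"
  unfolding is_kcat_def by simp
lemma aut_bij: "is_aut C g \<Longrightarrow> bij_betw (snd g x y) (Hom C x y) (Hom C (fst g x) (fst g y))"
  unfolding is_aut_def by simp
lemma aut_lin: "is_aut C g \<Longrightarrow> linear_on (sc C) (sc C) (Hom C x y) (Hom C (fst g x) (fst g y)) (snd g x y)"
  unfolding is_aut_def by simp
lemma aut_cmp: "is_aut C g \<Longrightarrow> a \<in> Hom C x y \<Longrightarrow> b \<in> Hom C y z \<Longrightarrow> 
        snd g x z (cmp C x y z b a) = cmp C (fst g x) (fst g y) (fst g z) (snd g y z b) (snd g x y a)"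
  unfolding is_aut_def by simp
lemma aut_idm: "is_aut C g \<Longrightarrow> snd g x x (idm C x) = idm C (fst g x)"
  unfolding is_aut_def by simp
lemma module_fscale: "module (fscale :: 'k::field \<Rightarrow> (nat \<Rightarrow> 'k) \<Rightarrow> _)"
  by unfold_locales (auto simp: fscale_def fun_eq_iff algebra_simps)

lemma span_fscale: "module.span fscale {v} = range (\<lambda>c. fscale c (v::nat \<Rightarrow> 'k::field))"
  by (rule module.span_singleton[OF module_fscale])

lemma lin_zero: assumes "linear_on s1 s2 S T f" "0 \<in> S" shows "f 0 = 0"
proof -
  have "f (0 + 0) = f 0 + f 0" using assms unfolding linear_on_def by blast
  then show ?thesis by simp
qed

lemma kcat_sub0:
  assumes "is_kcat C"
  shows "0 \<in> Hom C x y \<and> (\<forall>u\<in>Hom C x y. \<forall>v\<in>Hom C x y. u + v \<in> Hom C x y) \<and> (\<forall>c. \<forall>u\<in>Hom C x y. sc C c u \<in> Hom C x y)"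
proof -
  have m: "module (sc C)" using assms unfolding is_kcat_def module_iff_vector_space by simp
  have "module.subspace (sc C) (Hom C x y)" using assms unfolding is_kcat_def by simp
  then show ?thesis unfolding module.subspace_def[OF m] .
qed

lemma kcat_sub:
  assumes "is_kcat C"
  shows "0 \<in> Hom C x y" "a \<in> Hom C x y \<Longrightarrow> b \<in> Hom C x y \<Longrightarrow> a + b \<in> Hom C x y"
    "a \<in> Hom C x y \<Longrightarrow> sc C c a \<in> Hom C x y"
  using kcat_sub0[OF assms, of x y] by simp_all

lemma fscale_sub0:
  assumes "module.subspace fscale (S :: (nat \<Rightarrow> 'k::field) set)"
  shows "0 \<in> S \<and> (\<forall>u\<in>S. \<forall>v\<in>S. u + v \<in> S) \<and> (\<forall>c. \<forall>u\<in>S. fscale c u \<in> S)"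
  using assms unfolding module.subspace_def[OF module_fscale] .

lemma fscale_sub:
  assumes "module.subspace fscale (S :: (nat \<Rightarrow> 'k::field) set)"
  shows "0 \<in> S" "a \<in> S \<Longrightarrow> b \<in> S \<Longrightarrow> a + b \<in> S" "a \<in> S \<Longrightarrow> fscale c a \<in> S"
  using fscale_sub0[OF assms] by simp_all

lemma twist_BL:
  fixes C :: "('k::field, 'o, 'm::ab_group_add) kcat" and B :: "('o, 'm, nat \<Rightarrow> 'k) kmod"
  assumes kc: "is_kcat C" and ag: "is_aut C g" and BL: "is_BL C fscale L B" and gL: "fst g ` L = L"
  shows "is_BL C fscale L (twist C g B)"
proof -
  define gi where "gi = inv (fst g)"
  define h where "h x y = inv_into (Hom C (gi x) (gi y)) (snd g (gi x) (gi y))" for x y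
  have bg: "bij (fst g)" using ag unfolding is_aut_def by blast
  have ggi: "fst g (gi x) = x" for x unfolding gi_def by (rule surj_f_inv_f[OF bij_is_surj[OF bg]])
  have gig: "gi (fst g x) = x" for x unfolding gi_def by (rule inv_f_f[OF bij_is_inj[OF bg]])
  have sb: "bij_betw (snd g (gi x) (gi y)) (Hom C (gi x) (gi y)) (Hom C x y)" for x y
    using aut_bij[OF ag, of "gi x" "gi y"] unfolding ggi .
  have sl: "linear_on (sc C) (sc C) (Hom C (gi x) (gi y)) (Hom C x y) (snd g (gi x) (gi y))" for x y
    using aut_lin[OF ag, of "gi x" "gi y"] unfolding ggi .
  have hin: "h x y a \<in> Hom C (gi x) (gi y)" if "a \<in> Hom C x y" for x y a
    unfolding h_def by (rule inv_into_into) (use bij_betw_imp_surj_on[OF sb[of x y]] that in simp)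
  have hr: "snd g (gi x) (gi y) (h x y a) = a" if "a \<in> Hom C x y" for x y a
    unfolding h_def by (rule bij_betw_inv_into_right[OF sb that])
  have hl: "h x y (snd g (gi x) (gi y) b) = b" if "b \<in> Hom C (gi x) (gi y)" for x y b
    unfolding h_def by (rule bij_betw_inv_into_left[OF sb that])
  have hinj: "u = v" if "u \<in> Hom C (gi x) (gi y)" "v \<in> Hom C (gi x) (gi y)"
     "snd g (gi x) (gi y) u = snd g (gi x) (gi y) v" for x y u v
    using bij_betw_imp_inj_on[OF sb[of x y]] that by (meson inj_onD)
  have hadd: "h x y (a + b) = h x y a + h x y b" if "a \<in> Hom C x y" "b \<in> Hom C x y" for x y a b
  proof (rule hinj)
    show "snd g (gi x) (gi y) (h x y (a + b)) = snd g (gi x) (gi y) (h x y a + h x y b)"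
      using sl[of x y] hin hr that kcat_sub[OF kc] unfolding linear_on_def by simp
  qed (use hin that kcat_sub[OF kc] in auto)
  have hsc: "h x y (sc C c a) = sc C c (h x y a)" if "a \<in> Hom C x y" for x y a c
  proof (rule hinj)
    show "snd g (gi x) (gi y) (h x y (sc C c a)) = snd g (gi x) (gi y) (sc C c (h x y a))"
      using sl[of x y] hin hr that kcat_sub[OF kc] unfolding linear_on_def by simp
  qed (use hin that kcat_sub[OF kc] in auto)
  have hid: "h x x (idm C x) = idm C (gi x)" for x
    using aut_idm[OF ag, of "gi x"] hl[of "idm C (gi x)" x x] kcat_idm[OF kc] unfolding ggi by simp
  have hcmp: "h x z (cmp C x y z b a) = cmp C (gi x) (gi y) (gi z) (h y z b) (h x y a)"
    if "a \<in> Hom C x y" "b \<in> Hom C y z" for x y z a b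
  proof (rule hinj)
    show "snd g (gi x) (gi z) (h x z (cmp C x y z b a)) = snd g (gi x) (gi z) (cmp C (gi x) (gi y) (gi z) (h y z b) (h x y a))"
      using aut_cmp[OF ag hin[OF that(1)] hin[OF that(2)]] hr that kcat_cmp[OF kc] unfolding ggi by simp
  qed (use hin that kcat_cmp[OF kc] in auto)
  have h0: "h x y a \<noteq> 0" if "a \<in> Hom C x y" "a \<noteq> 0" for x y a
  proof
    assume "h x y a = 0"
    then have "a = snd g (gi x) (gi y) 0" using hr[OF that(1)] by simp
    also have "\<dots> = 0" by (rule lin_zero[OF sl kcat_sub(1)[OF kc]])
    finally show False using that by simp
  qed
  have tw: "Mob (twist C g B) x = Mob B (gi x)" "Mmap (twist C g B) x y a = Mmap B (gi x) (gi y) (h x y a)" for x y a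
    unfolding twist_def gi_def h_def by simp_all
  have mB: "is_module C fscale B" using BL unfolding is_BL_def by blast
  have giL: "gi x \<in> L \<longleftrightarrow> x \<in> L" for x
  proof
    assume "gi x \<in> L" then show "x \<in> L" using gL ggi[of x] by force
  next
    assume "x \<in> L" then obtain y where "y \<in> L" "x = fst g y" using gL by force
    then show "gi x \<in> L" using gig by simp
  qed
  have mod: "is_module C fscale (twist C g B)"
    unfolding is_module_def tw
  proof (intro conjI allI ballI)
    fix x show "module.subspace fscale (Mob B (gi x))" using mB unfolding is_module_def by simp
  next
    fix x y a assume "a \<in> Hom C x y"
    then show "linear_on fscale fscale (Mob B (gi y)) (Mob B (gi x)) (Mmap B (gi x) (gi y) (h x y a))"
      using mB hin unfolding is_module_def by simp
  next
    fix x y v assume v: "v \<in> Mob B (gi y)"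
    have L1: "linear_on (sc C) fscale (Hom C (gi x) (gi y)) (Mob B (gi x)) (\<lambda>a. Mmap B (gi x) (gi y) a v)"
      using mB v unfolding is_module_def by simp
    show "linear_on (sc C) fscale (Hom C x y) (Mob B (gi x)) (\<lambda>a. Mmap B (gi x) (gi y) (h x y a) v)"
      unfolding linear_on_def
    proof (intro conjI ballI allI)
      show "(\<lambda>a. Mmap B (gi x) (gi y) (h x y a) v) ` Hom C x y \<subseteq> Mob B (gi x)"
        using L1 hin unfolding linear_on_def by auto
    next
      fix u w assume "u \<in> Hom C x y" "w \<in> Hom C x y"
      then show "Mmap B (gi x) (gi y) (h x y (u + w)) v = Mmap B (gi x) (gi y) (h x y u) v + Mmap B (gi x) (gi y) (h x y w) v"
        using L1 hin hadd unfolding linear_on_def by simp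
    next
      fix c u assume "u \<in> Hom C x y"
      then show "Mmap B (gi x) (gi y) (h x y (sc C c u)) v = fscale c (Mmap B (gi x) (gi y) (h x y u) v)"
        using L1 hin hsc unfolding linear_on_def by simp
    qed
  next
    fix x v assume "v \<in> Mob B (gi x)"
    then show "Mmap B (gi x) (gi x) (h x x (idm C x)) v = v" using mB hid unfolding is_module_def by simp
  next
    fix x y z a b v assume "a \<in> Hom C x y" "b \<in> Hom C y z" "v \<in> Mob B (gi z)"
    then show "Mmap B (gi x) (gi z) (h x z (cmp C x y z b a)) v = Mmap B (gi x) (gi y) (h x y a) (Mmap B (gi y) (gi z) (h y z b) v)"
      using mB hcmp hin unfolding is_module_def by simp
  qed
  show ?thesis unfolding is_BL_def
  proof (intro conjI ballI allI impI)
    show "is_module C fscale (twist C g B)" by (rule mod)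
  next
    fix x assume "x \<in> L"
    then show "\<exists>v. v \<noteq> 0 \<and> Mob (twist C g B) x = module.span fscale {v}"
      using BL giL unfolding is_BL_def tw by simp
  next
    fix x assume "x \<notin> L"
    then show "Mob (twist C g B) x = {0}" using BL giL unfolding is_BL_def tw by simp
  next
    fix x y a assume "x \<in> L" "y \<in> L" "a \<in> Hom C x y" "a \<noteq> 0"
    then show "\<exists>v\<in>Mob (twist C g B) y. Mmap (twist C g B) x y a v \<noteq> 0"
      using BL giL h0 hin unfolding is_BL_def tw by simp
  qed
qed


lemma mod_lin_v: "is_module C sw M \<Longrightarrow> a \<in> Hom C x y \<Longrightarrow> linear_on sw sw (Mob M y) (Mob M x) (Mmap M x y a)"
  unfolding is_module_def by simp
lemma mod_lin_a: "is_module C sw M \<Longrightarrow> v \<in> Mob M y \<Longrightarrow> linear_on (sc C) sw (Hom C x y) (Mob M x) (\<lambda>a. Mmap M x y a v)"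
  unfolding is_module_def by simp
lemma mod_id: "is_module C sw M \<Longrightarrow> v \<in> Mob M x \<Longrightarrow> Mmap M x x (idm C x) v = v"
  unfolding is_module_def by simp
lemma mod_cmp: "is_module C sw M \<Longrightarrow> a \<in> Hom C x y \<Longrightarrow> b \<in> Hom C y z \<Longrightarrow> v \<in> Mob M z \<Longrightarrow>
   Mmap M x z (cmp C x y z b a) v = Mmap M x y a (Mmap M y z b v)"
  unfolding is_module_def by simp
lemma mod_sub: "is_module C sw M \<Longrightarrow> module.subspace sw (Mob M x)"
  unfolding is_module_def by simp

lemma lin_image: "linear_on s1 s2 S T f \<Longrightarrow> u \<in> S \<Longrightarrow> f u \<in> T"
  unfolding linear_on_def by blast
lemma lin_add: "linear_on s1 s2 S T f \<Longrightarrow> u \<in> S \<Longrightarrow> v \<in> S \<Longrightarrow> f (u + v) = f u + f v"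
  unfolding linear_on_def by blast
lemma lin_sc: "linear_on s1 s2 S T f \<Longrightarrow> u \<in> S \<Longrightarrow> f (s1 c u) = s2 c (f u)"
  unfolding linear_on_def by blast

definition coord :: "(nat \<Rightarrow> 'k::field) \<Rightarrow> (nat \<Rightarrow> 'k) \<Rightarrow> 'k" where
  "coord v w = w (SOME n. v n \<noteq> 0) / v (SOME n. v n \<noteq> 0)"

lemma coord_nz: "v \<noteq> 0 \<Longrightarrow> v (SOME n. v n \<noteq> (0::'k::field)) \<noteq> 0"
proof -
  assume "v \<noteq> 0"
  then have "\<exists>n. v n \<noteq> 0" by (auto simp: fun_eq_iff)
  then show ?thesis by (rule someI_ex)
qed

lemma coord_scale: "v \<noteq> 0 \<Longrightarrow> coord v (fscale c v) = c"
  using coord_nz[of v] by (simp add: coord_def fscale_def)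
lemma coord_add: "coord v (u + w) = coord v u + coord v w"
  by (simp add: coord_def add_divide_distrib)
lemma coord_sc: "coord v (fscale c u) = c * coord v u"
  by (simp add: coord_def fscale_def)
lemma coord_zero: "coord v 0 = 0"
  by (simp add: coord_def)
lemma fscale_fscale: "fscale c (fscale d v) = fscale (c * d) v"
  by (simp add: fscale_def fun_eq_iff)
lemma fscale_zero_right[simp]: "fscale c 0 = 0"
  by (simp add: fscale_def fun_eq_iff)
lemma fscale_zero_left[simp]: "fscale 0 v = 0"
  by (simp add: fscale_def fun_eq_iff)
lemma fscale_one[simp]: "fscale 1 v = v"
  by (simp add: fscale_def fun_eq_iff)
lemma fscale_add_left: "fscale (a + b) v = fscale a v + fscale b v"
  by (simp add: fscale_def fun_eq_iff algebra_simps)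
lemma fscale_inj: "v \<noteq> 0 \<Longrightarrow> fscale a v = fscale b (v::nat \<Rightarrow> 'k::field) \<Longrightarrow> a = b"
  by (metis coord_scale)

definition gen :: "('o, 'm, nat \<Rightarrow> 'k::field) kmod \<Rightarrow> 'o \<Rightarrow> (nat \<Rightarrow> 'k)" where
  "gen M x = (SOME v. v \<noteq> 0 \<and> Mob M x = module.span fscale {v})"

lemma gen: assumes "is_BL C fscale L M" "x \<in> L"
  shows "gen M x \<noteq> 0 \<and> Mob M x = range (\<lambda>c. fscale c (gen M x))"
proof -
  have "\<exists>v. v \<noteq> 0 \<and> Mob M x = module.span fscale {v}" using assms unfolding is_BL_def by simp
  then have "gen M x \<noteq> 0 \<and> Mob M x = module.span fscale {gen M x}"
    unfolding gen_def by (rule someI_ex)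
  then show ?thesis unfolding span_fscale .
qed

lemma BL_rep: assumes "is_BL C fscale L M" "x \<in> L" "w \<in> Mob M x"
  shows "w = fscale (coord (gen M x) w) (gen M x)"
proof -
  obtain c where "w = fscale c (gen M x)" using gen[OF assms(1,2)] assms(3) by auto
  moreover have "coord (gen M x) w = c" using \<open>w = fscale c (gen M x)\<close> coord_scale[OF conjunct1[OF gen[OF assms(1,2)]]] by simp
  ultimately show ?thesis by simp
qed

lemma gen_in: "is_BL C fscale L M \<Longrightarrow> x \<in> L \<Longrightarrow> fscale c (gen M x) \<in> Mob M x"
  using gen[of C L M x] by simp

definition amap :: "('k::field, 'o, 'm::ab_group_add) kcat \<Rightarrow> ('o, 'm, nat \<Rightarrow> 'k) kmod \<Rightarrow> 'o \<Rightarrow> 'o \<Rightarrow> 'm \<Rightarrow> 'k" where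
  "amap C M x y a = coord (gen M x) (Mmap M x y a (gen M y))"

lemma BL_mod: "is_BL C sw L M \<Longrightarrow> is_module C sw M" unfolding is_BL_def by simp

lemma amap_eq: assumes BL: "is_BL C fscale L M" and "x \<in> L" "y \<in> L" "a \<in> Hom C x y"
  shows "Mmap M x y a (gen M y) = fscale (amap C M x y a) (gen M x)"
proof -
  have "gen M y \<in> Mob M y" using gen_in[OF BL assms(3), of 1] by simp
  then have "Mmap M x y a (gen M y) \<in> Mob M x" using lin_image[OF mod_lin_v[OF BL_mod[OF BL] assms(4)]] by simp
  then show ?thesis unfolding amap_def using BL_rep[OF BL assms(2)] by simp
qed

lemma amap_v: assumes BL: "is_BL C fscale L M" and "x \<in> L" "y \<in> L" "a \<in> Hom C x y" "v \<in> Mob M y"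
  shows "Mmap M x y a v = fscale (coord (gen M y) v * amap C M x y a) (gen M x)"
proof -
  have "Mmap M x y a v = Mmap M x y a (fscale (coord (gen M y) v) (gen M y))"
    using BL_rep[OF BL assms(3,5)] by simp
  also have "\<dots> = fscale (coord (gen M y) v) (Mmap M x y a (gen M y))"
    using lin_sc[OF mod_lin_v[OF BL_mod[OF BL] assms(4)]] gen_in[OF BL assms(3), of 1] by simp
  finally show ?thesis using amap_eq[OF assms(1-4)] fscale_fscale by simp
qed

lemma amap_id: assumes BL: "is_BL C fscale L M" and "x \<in> L"
  shows "amap C M x x (idm C x) = 1"
proof -
  have g: "gen M x \<in> Mob M x" using gen_in[OF BL assms(2), of 1] by simp
  have "Mmap M x x (idm C x) (gen M x) = gen M x" by (rule mod_id[OF BL_mod[OF BL] g])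
  then show ?thesis unfolding amap_def using coord_scale[OF conjunct1[OF gen[OF BL assms(2)]], of 1] by simp
qed

lemma BL_nz: "is_BL C sw L M \<Longrightarrow> x \<in> L \<Longrightarrow> y \<in> L \<Longrightarrow> a \<in> Hom C x y \<Longrightarrow> a \<noteq> 0 \<Longrightarrow>
  \<exists>v\<in>Mob M y. Mmap M x y a v \<noteq> 0"
  unfolding is_BL_def by simp

lemma amap_cmp: assumes BL: "is_BL C fscale L M" and "x \<in> L" "y \<in> L" "z \<in> L"
  "a \<in> Hom C x y" "b \<in> Hom C y z"
  shows "amap C M x z (cmp C x y z b a) = amap C M y z b * amap C M x y a"
proof -
  have g: "gen M z \<in> Mob M z" using gen_in[OF BL assms(4), of 1] by simp
  have "Mmap M x z (cmp C x y z b a) (gen M z) = Mmap M x y a (Mmap M y z b (gen M z))"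
    by (rule mod_cmp[OF BL_mod[OF BL] assms(5,6) g])
  also have "\<dots> = Mmap M x y a (fscale (amap C M y z b) (gen M y))"
    using amap_eq[OF BL assms(3,4,6)] by simp
  also have "\<dots> = fscale (amap C M y z b * amap C M x y a) (gen M x)"
    using amap_v[OF BL assms(2,3,5) gen_in[OF BL assms(3)]] coord_scale[OF conjunct1[OF gen[OF BL assms(3)]]] by simp
  finally show ?thesis unfolding amap_def using coord_scale[OF conjunct1[OF gen[OF BL assms(2)]]] by simp
qed

lemma amap_nz: assumes BL: "is_BL C fscale L M" and "x \<in> L" "y \<in> L" "a \<in> Hom C x y" "a \<noteq> 0"
  shows "amap C M x y a \<noteq> 0"
proof
  assume z: "amap C M x y a = 0"
  obtain v where v: "v \<in> Mob M y" "Mmap M x y a v \<noteq> 0" using BL_nz[OF BL assms(2-5)] by blast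
  show False using v amap_v[OF BL assms(2-4) v(1)] z by simp
qed

lemma amap_sc: assumes BL: "is_BL C fscale L M" and "x \<in> L" "y \<in> L" "a \<in> Hom C x y"
  shows "amap C M x y (sc C c a) = c * amap C M x y a"
  unfolding amap_def using lin_sc[OF mod_lin_a[OF BL_mod[OF BL] gen_in[OF BL assms(3), of 1]] assms(4)]
  by (simp add: coord_sc)


primrec pprod :: "(int \<Rightarrow> 'k::field) \<Rightarrow> nat \<Rightarrow> 'k" where
  "pprod r 0 = 1" | "pprod r (Suc n) = pprod r n * r (int n)"
primrec nprod :: "(int \<Rightarrow> 'k::field) \<Rightarrow> nat \<Rightarrow> 'k" where
  "nprod r 0 = 1" | "nprod r (Suc n) = nprod r n / r (- int n - 1)"
definition lamf :: "(int \<Rightarrow> 'k::field) \<Rightarrow> int \<Rightarrow> 'k" where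
  "lamf r i = (if 0 \<le> i then pprod r (nat i) else nprod r (nat (- i)))"

lemma pprod_nz: "\<forall>t. r t \<noteq> 0 \<Longrightarrow> pprod r n \<noteq> 0"
  by (induction n) auto
lemma nprod_nz: "\<forall>t. r t \<noteq> 0 \<Longrightarrow> nprod r n \<noteq> 0"
  by (induction n) auto
lemma lamf_nz: assumes "\<forall>t. r t \<noteq> 0" shows "lamf r i \<noteq> 0"
  unfolding lamf_def using pprod_nz[OF assms] nprod_nz[OF assms] by simp

lemma lamf_step: assumes r: "\<forall>t. r t \<noteq> 0" shows "lamf r (t + 1) = lamf r t * r t"
proof (cases "0 \<le> t")
  case True
  then have "nat (t + 1) = Suc (nat t)" by simp
  then show ?thesis using True unfolding lamf_def by simp
next
  case False
  define n where "n = nat (- t - 1)"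
  have t: "t = - int n - 1" using False unfolding n_def by simp
  have t1: "t + 1 = - int n" using t by simp
  have "lamf r (t + 1) = nprod r n"
    unfolding lamf_def t1 by (cases "n = 0") simp_all
  moreover have "lamf r t = nprod r n / r t"
  proof -
    have "nat (- t) = Suc n" using t by simp
    then show ?thesis unfolding lamf_def using False t by simp
  qed
  ultimately show ?thesis using r by simp
qed

lemma linear_index_between: "linear_index I \<Longrightarrow> i \<in> I \<Longrightarrow> j \<in> I \<Longrightarrow> i \<le> t \<Longrightarrow> t \<le> j \<Longrightarrow> t \<in> I"
  unfolding linear_index_def by auto


lemma scal_iso:
  fixes m n :: "nat \<Rightarrow> 'k::field"
  assumes "m \<noteq> 0" "n \<noteq> 0" "l \<noteq> 0"
  shows "linear_on fscale fscale (range (\<lambda>c. fscale c m)) (range (\<lambda>c. fscale c n)) (\<lambda>w. fscale (l * coord m w) n)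
     \<and> bij_betw (\<lambda>w. fscale (l * coord m w) n) (range (\<lambda>c. fscale c m)) (range (\<lambda>c. fscale c n))"
proof (intro conjI)
  show "linear_on fscale fscale (range (\<lambda>c. fscale c m)) (range (\<lambda>c. fscale c n)) (\<lambda>w. fscale (l * coord m w) n)"
    unfolding linear_on_def
    by (auto simp: coord_add coord_sc fscale_fscale fscale_add_left algebra_simps)
  show "bij_betw (\<lambda>w. fscale (l * coord m w) n) (range (\<lambda>c. fscale c m)) (range (\<lambda>c. fscale c n))"
    unfolding bij_betw_def
  proof
    show "inj_on (\<lambda>w. fscale (l * coord m w) n) (range (\<lambda>c. fscale c m))"
    proof (rule inj_onI)
      fix u v assume "u \<in> range (\<lambda>c. fscale c m)" "v \<in> range (\<lambda>c. fscale c m)"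
        and e: "fscale (l * coord m u) n = fscale (l * coord m v) n"
      then obtain a b where ab: "u = fscale a m" "v = fscale b m" by auto
      have "fscale (l * a) n = fscale (l * b) n" using e coord_scale[OF assms(1)] ab by simp
      then have "l * a = l * b" by (rule fscale_inj[OF assms(2)])
      then show "u = v" using ab assms(3) by simp
    qed
  next
    show "(\<lambda>w. fscale (l * coord m w) n) ` range (\<lambda>c. fscale c m) = range (\<lambda>c. fscale c n)"
    proof
      show "(\<lambda>w. fscale (l * coord m w) n) ` range (\<lambda>c. fscale c m) \<subseteq> range (\<lambda>c. fscale c n)" by auto
      show "range (\<lambda>c. fscale c n) \<subseteq> (\<lambda>w. fscale (l * coord m w) n) ` range (\<lambda>c. fscale c m)"
      proof
        fix w assume "w \<in> range (\<lambda>c. fscale c n)"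
        then obtain d where d: "w = fscale d n" by auto
        have "w = (\<lambda>w. fscale (l * coord m w) n) (fscale (d / l) m)"
          using d coord_scale[OF assms(1)] assms(3) by simp
        then show "w \<in> (\<lambda>w. fscale (l * coord m w) n) ` range (\<lambda>c. fscale c m)" by blast
      qed
    qed
  qed
qed


lemma BL_unique:
  fixes C :: "('k::field, 'o, 'm::ab_group_add) kcat" and M N :: "('o, 'm, nat \<Rightarrow> 'k) kmod"
  assumes lin: "is_line C L" and BM: "is_BL C fscale L M" and BN: "is_BL C fscale L N"
  shows "mod_iso C fscale M N"
proof -
  have "\<exists>I ori (phi :: int \<Rightarrow> 'o) (F :: int \<Rightarrow> int \<Rightarrow> 'k \<Rightarrow> 'm).
        linear_index I \<and> bij_betw phi I L \<and>
        (\<forall>i\<in>I. \<forall>j\<in>I. linear_on (*) (sc C) (kQhom ori i j) (Hom C (phi i) (phi j)) (F i j) \<and>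
                       bij_betw (F i j) (kQhom ori i j) (Hom C (phi i) (phi j))) \<and>
        (\<forall>i\<in>I. \<forall>j\<in>I. \<forall>l\<in>I. \<forall>c\<in>kQhom ori i j. \<forall>d\<in>kQhom ori j l.
            F i l (d * c) = cmp C (phi i) (phi j) (phi l) (F j l d) (F i j c)) \<and>
        (\<forall>i\<in>I. F i i 1 = idm C (phi i))"
    using lin unfolding is_line_def by (rule conjunct2)
  then obtain I ori and phi :: "int \<Rightarrow> 'o" and F :: "int \<Rightarrow> int \<Rightarrow> 'k \<Rightarrow> 'm" where
    LI: "linear_index I" and bp: "bij_betw phi I L" and
    HF: "\<forall>i\<in>I. \<forall>j\<in>I. linear_on (*) (sc C) (kQhom ori i j) (Hom C (phi i) (phi j)) (F i j) \<and>
                       bij_betw (F i j) (kQhom ori i j) (Hom C (phi i) (phi j))" and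
    HC: "\<forall>i\<in>I. \<forall>j\<in>I. \<forall>l\<in>I. \<forall>c\<in>kQhom ori i j. \<forall>d\<in>kQhom ori j l.
            F i l (d * c) = cmp C (phi i) (phi j) (phi l) (F j l d) (F i j c)" and
    HI: "\<forall>i\<in>I. F i i 1 = idm C (phi i)"
    by (elim exE conjE)
  have Flin: "linear_on (*) (sc C) (kQhom ori i j) (Hom C (phi i) (phi j)) (F i j)" if "i \<in> I" "j \<in> I" for i j
    using HF that by simp
  have Fbij: "bij_betw (F i j) (kQhom ori i j) (Hom C (phi i) (phi j))" if "i \<in> I" "j \<in> I" for i j
    using HF that by simp
  have phiL: "phi i \<in> L" if "i \<in> I" for i using bij_betwE[OF bp] that by blast
  define P where "P i j = lq_path ori i j" for i j
  have kQ1: "(1::'k) \<in> kQhom ori i j" if "P i j" for i j using that unfolding P_def kQhom_def by simp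
  have kQ0: "kQhom ori i j = {0::'k}" if "\<not> P i j" for i j using that unfolding P_def kQhom_def by simp
  have kQz: "(0::'k) \<in> kQhom ori i j" for i j unfolding kQhom_def by simp
  have F0: "F i j 0 = 0" if "i \<in> I" "j \<in> I" for i j by (rule lin_zero[OF Flin[OF that] kQz])
  define e where "e i j = F i j 1" for i j
  have e_in: "e i j \<in> Hom C (phi i) (phi j)" if "i \<in> I" "j \<in> I" "P i j" for i j
    unfolding e_def using bij_betwE[OF Fbij[OF that(1,2)]] kQ1[OF that(3)] by blast
  have e_nz: "e i j \<noteq> 0" if "i \<in> I" "j \<in> I" "P i j" for i j
  proof
    assume "e i j = 0"
    then have "F i j 1 = F i j 0" using F0[OF that(1,2)] unfolding e_def by simp
    then have "(1::'k) = 0" using bij_betw_imp_inj_on[OF Fbij[OF that(1,2)]] kQ1[OF that(3)] kQz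
      by (meson inj_onD)
    then show False by simp
  qed
  have e_cmp: "e i l = cmp C (phi i) (phi j) (phi l) (e j l) (e i j)"
    if "i \<in> I" "j \<in> I" "l \<in> I" "P i j" "P j l" for i j l
  proof -
    have "F i l (1 * 1) = cmp C (phi i) (phi j) (phi l) (F j l 1) (F i j 1)"
      using HC that kQ1[OF that(4)] kQ1[OF that(5)] by blast
    then show ?thesis unfolding e_def by simp
  qed
  have Pii: "P i i" for i unfolding P_def lq_path_def by auto
  have e_id: "e i i = idm C (phi i)" if "i \<in> I" for i unfolding e_def using HI that by simp
  define \<alpha> where "\<alpha> i j = amap C M (phi i) (phi j) (e i j)" for i j
  define \<beta> where "\<beta> i j = amap C N (phi i) (phi j) (e i j)" for i j
  have \<alpha>_nz: "\<alpha> i j \<noteq> 0" if "i \<in> I" "j \<in> I" "P i j" for i j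
    unfolding \<alpha>_def by (rule amap_nz[OF BM phiL phiL e_in e_nz]) (use that in auto)
  have \<beta>_nz: "\<beta> i j \<noteq> 0" if "i \<in> I" "j \<in> I" "P i j" for i j
    unfolding \<beta>_def by (rule amap_nz[OF BN phiL phiL e_in e_nz]) (use that in auto)
  have \<alpha>_id: "\<alpha> i i = 1" if "i \<in> I" for i
    unfolding \<alpha>_def e_id[OF that] by (rule amap_id[OF BM phiL[OF that]])
  have \<beta>_id: "\<beta> i i = 1" if "i \<in> I" for i
    unfolding \<beta>_def e_id[OF that] by (rule amap_id[OF BN phiL[OF that]])
  have \<alpha>_cmp: "\<alpha> i l = \<alpha> j l * \<alpha> i j" if "i \<in> I" "j \<in> I" "l \<in> I" "P i j" "P j l" for i j l
    unfolding \<alpha>_def e_cmp[OF that]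
    by (rule amap_cmp[OF BM phiL phiL phiL e_in e_in]) (use that in auto)
  have \<beta>_cmp: "\<beta> i l = \<beta> j l * \<beta> i j" if "i \<in> I" "j \<in> I" "l \<in> I" "P i j" "P j l" for i j l
    unfolding \<beta>_def e_cmp[OF that]
    by (rule amap_cmp[OF BN phiL phiL phiL e_in e_in]) (use that in auto)
  define \<rho> where "\<rho> t = (if ori t then \<alpha> t (t + 1) / \<beta> t (t + 1) else \<beta> (t + 1) t / \<alpha> (t + 1) t)" for t
  define \<rho>' where "\<rho>' t = (if \<rho> t = 0 then 1 else \<rho> t)" for t
  define lam where "lam = lamf \<rho>'"
  have rnz: "\<forall>t. \<rho>' t \<noteq> 0" unfolding \<rho>'_def by simp
  have Pup: "P t (t + 1)" if "ori t" for t using that unfolding P_def lq_path_def by auto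
  have Pdn: "P (t + 1) t" if "\<not> ori t" for t using that unfolding P_def lq_path_def by auto
  have lstep: "lam (t + 1) = lam t * \<rho> t" if "t \<in> I" "t + 1 \<in> I" for t
  proof -
    have "\<rho> t \<noteq> 0"
      unfolding \<rho>_def using \<alpha>_nz \<beta>_nz that Pup Pdn by auto
    then show ?thesis unfolding lam_def lamf_step[OF rnz] \<rho>'_def by simp
  qed
  have up: "lam i * \<alpha> i j = lam j * \<beta> i j"
    if "i \<in> I" "i \<le> j" "j \<in> I" "\<forall>t. i \<le> t \<and> t < j \<longrightarrow> ori t" for i j
  proof -
    have "j \<in> I \<longrightarrow> (\<forall>t. i \<le> t \<and> t < j \<longrightarrow> ori t) \<longrightarrow> lam i * \<alpha> i j = lam j * \<beta> i j"
    proof (rule int_ge_induct[OF \<open>i \<le> j\<close>])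
      show "i \<in> I \<longrightarrow> (\<forall>t. i \<le> t \<and> t < i \<longrightarrow> ori t) \<longrightarrow> lam i * \<alpha> i i = lam i * \<beta> i i"
        using \<alpha>_id \<beta>_id by simp
    next
      fix j assume ij: "i \<le> j" and IH: "j \<in> I \<longrightarrow> (\<forall>t. i \<le> t \<and> t < j \<longrightarrow> ori t) \<longrightarrow> lam i * \<alpha> i j = lam j * \<beta> i j"
      show "j + 1 \<in> I \<longrightarrow> (\<forall>t. i \<le> t \<and> t < j + 1 \<longrightarrow> ori t) \<longrightarrow> lam i * \<alpha> i (j + 1) = lam (j + 1) * \<beta> i (j + 1)"
      proof (intro impI)
        assume j1: "j + 1 \<in> I" and o: "\<forall>t. i \<le> t \<and> t < j + 1 \<longrightarrow> ori t"
        have jI: "j \<in> I" using linear_index_between[OF LI \<open>i \<in> I\<close> j1] ij by simp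
        have oj: "ori j" using o ij by simp
        have ih: "lam i * \<alpha> i j = lam j * \<beta> i j" using IH jI o by simp
        have Pij: "P i j" using o ij unfolding P_def lq_path_def by simp
        have Pj: "P j (j + 1)" using Pup[OF oj] .
        have a: "\<alpha> i (j + 1) = \<alpha> j (j + 1) * \<alpha> i j" by (rule \<alpha>_cmp[OF \<open>i \<in> I\<close> jI j1 Pij Pj])
        have b: "\<beta> i (j + 1) = \<beta> j (j + 1) * \<beta> i j" by (rule \<beta>_cmp[OF \<open>i \<in> I\<close> jI j1 Pij Pj])
        have l: "lam (j + 1) = lam j * (\<alpha> j (j + 1) / \<beta> j (j + 1))"
          using lstep[OF jI j1] oj unfolding \<rho>_def by simp
        have bnz: "\<beta> j (j + 1) \<noteq> 0" by (rule \<beta>_nz[OF jI j1 Pj])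
        show "lam i * \<alpha> i (j + 1) = lam (j + 1) * \<beta> i (j + 1)"
          unfolding a b l using ih bnz by (simp add: field_simps)
      qed
    qed
    then show ?thesis using that by simp
  qed
  have down: "lam i * \<alpha> i j = lam j * \<beta> i j"
    if "j \<in> I" "j \<le> i" "i \<in> I" "\<forall>t. j \<le> t \<and> t < i \<longrightarrow> \<not> ori t" for i j
  proof -
    have "i \<in> I \<longrightarrow> (\<forall>t. j \<le> t \<and> t < i \<longrightarrow> \<not> ori t) \<longrightarrow> lam i * \<alpha> i j = lam j * \<beta> i j"
    proof (rule int_ge_induct[OF \<open>j \<le> i\<close>])
      show "j \<in> I \<longrightarrow> (\<forall>t. j \<le> t \<and> t < j \<longrightarrow> \<not> ori t) \<longrightarrow> lam j * \<alpha> j j = lam j * \<beta> j j"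
        using \<alpha>_id \<beta>_id by simp
    next
      fix i assume ij: "j \<le> i" and IH: "i \<in> I \<longrightarrow> (\<forall>t. j \<le> t \<and> t < i \<longrightarrow> \<not> ori t) \<longrightarrow> lam i * \<alpha> i j = lam j * \<beta> i j"
      show "i + 1 \<in> I \<longrightarrow> (\<forall>t. j \<le> t \<and> t < i + 1 \<longrightarrow> \<not> ori t) \<longrightarrow> lam (i + 1) * \<alpha> (i + 1) j = lam j * \<beta> (i + 1) j"
      proof (intro impI)
        assume i1: "i + 1 \<in> I" and o: "\<forall>t. j \<le> t \<and> t < i + 1 \<longrightarrow> \<not> ori t"
        have iI: "i \<in> I" using linear_index_between[OF LI \<open>j \<in> I\<close> i1] ij by simp
        have oi: "\<not> ori i" using o ij by simp
        have ih: "lam i * \<alpha> i j = lam j * \<beta> i j" using IH iI o by simp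
        have Pij: "P i j" using o ij unfolding P_def lq_path_def by simp
        have Pi: "P (i + 1) i" using Pdn[OF oi] .
        have a: "\<alpha> (i + 1) j = \<alpha> i j * \<alpha> (i + 1) i" by (rule \<alpha>_cmp[OF i1 iI \<open>j \<in> I\<close> Pi Pij])
        have b: "\<beta> (i + 1) j = \<beta> i j * \<beta> (i + 1) i" by (rule \<beta>_cmp[OF i1 iI \<open>j \<in> I\<close> Pi Pij])
        have l: "lam (i + 1) = lam i * (\<beta> (i + 1) i / \<alpha> (i + 1) i)"
          using lstep[OF iI i1] oi unfolding \<rho>_def by simp
        have anz: "\<alpha> (i + 1) i \<noteq> 0" by (rule \<alpha>_nz[OF i1 iI Pi])
        show "lam (i + 1) * \<alpha> (i + 1) j = lam j * \<beta> (i + 1) j"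
          unfolding a b l using ih anz by (simp add: field_simps)
      qed
    qed
    then show ?thesis using that by simp
  qed
  have compat: "lam i * \<alpha> i j = lam j * \<beta> i j" if "i \<in> I" "j \<in> I" "P i j" for i j
  proof -
    have "(i \<le> j \<and> (\<forall>t. i \<le> t \<and> t < j \<longrightarrow> ori t)) \<or> (j \<le> i \<and> (\<forall>t. j \<le> t \<and> t < i \<longrightarrow> \<not> ori t))"
      using that(3) unfolding P_def lq_path_def .
    then show ?thesis using up down that by blast
  qed
  have lnz: "lam i \<noteq> 0" for i unfolding lam_def by (rule lamf_nz[OF rnz])
  define idx where "idx x = inv_into I phi x" for x
  have idxI: "idx x \<in> I" "phi (idx x) = x" if "x \<in> L" for x
  proof -
    have "x \<in> phi ` I" using bij_betw_imp_surj_on[OF bp] that by simp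
    then show "idx x \<in> I" unfolding idx_def by (rule inv_into_into)
    show "phi (idx x) = x" unfolding idx_def by (rule bij_betw_inv_into_right[OF bp that])
  qed
  define f where "f x w = (if x \<in> L then fscale (lam (idx x) * coord (gen M x) w) (gen N x) else w)" for x w
  have f0: "f x 0 = 0" for x by (simp add: f_def coord_zero)
  have Mz: "Mob M x = {0}" if "x \<notin> L" for x using BM that unfolding is_BL_def by simp
  have Nz: "Mob N x = {0}" if "x \<notin> L" for x using BN that unfolding is_BL_def by simp
  have part1: "linear_on fscale fscale (Mob M x) (Mob N x) (f x) \<and> bij_betw (f x) (Mob M x) (Mob N x)" for x
  proof (cases "x \<in> L")
    case True
    have fx: "f x = (\<lambda>w. fscale (lam (idx x) * coord (gen M x) w) (gen N x))"
      using True unfolding f_def by (simp add: fun_eq_iff)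
    show ?thesis unfolding fx using conjunct2[OF gen[OF BM True]] conjunct2[OF gen[OF BN True]]
      scal_iso[OF conjunct1[OF gen[OF BM True]] conjunct1[OF gen[OF BN True]] lnz] by simp
  next
    case False
    have fx: "f x = (\<lambda>w. w)" using False unfolding f_def by (simp add: fun_eq_iff)
    show ?thesis unfolding fx Mz[OF False] Nz[OF False] linear_on_def bij_betw_def by simp
  qed
  have M0: "0 \<in> Mob M x" for x by (rule fscale_sub(1)[OF mod_sub[OF BL_mod[OF BM]]])
  have N0: "0 \<in> Mob N x" for x by (rule fscale_sub(1)[OF mod_sub[OF BL_mod[OF BN]]])
  have fin: "f y v \<in> Mob N y" if "v \<in> Mob M y" for y v
    using lin_image[OF conjunct1[OF part1] that] .
  show ?thesis unfolding mod_iso_def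
  proof (intro exI conjI allI ballI)
    fix x show "linear_on fscale fscale (Mob M x) (Mob N x) (f x)" using part1 by simp
    show "bij_betw (f x) (Mob M x) (Mob N x)" using part1 by simp
  next
    fix x y a v assume a: "a \<in> Hom C x y" and v: "v \<in> Mob M y"
    show "f x (Mmap M x y a v) = Mmap N x y a (f y v)"
    proof (cases "y \<in> L")
      case False
      have v0: "v = 0" using v Mz[OF False] by simp
      have "Mmap M x y a 0 = 0" by (rule lin_zero[OF mod_lin_v[OF BL_mod[OF BM] a] M0])
      moreover have "Mmap N x y a 0 = 0" by (rule lin_zero[OF mod_lin_v[OF BL_mod[OF BN] a] N0])
      ultimately show ?thesis using v0 f0 by simp
    next
      case yL: True
      show ?thesis
      proof (cases "x \<in> L")
        case False
        have "Mmap M x y a v \<in> Mob M x" by (rule lin_image[OF mod_lin_v[OF BL_mod[OF BM] a] v])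
        then have l: "Mmap M x y a v = 0" using Mz[OF False] by simp
        have "Mmap N x y a (f y v) \<in> Mob N x" by (rule lin_image[OF mod_lin_v[OF BL_mod[OF BN] a] fin[OF v]])
        then have r: "Mmap N x y a (f y v) = 0" using Nz[OF False] by simp
        show ?thesis using l r f0 by simp
      next
        case xL: True
        define i where "i = idx x"
        define j where "j = idx y"
        have iI: "i \<in> I" and xi: "x = phi i" using idxI[OF xL] unfolding i_def by simp_all
        have jI: "j \<in> I" and yj: "y = phi j" using idxI[OF yL] unfolding j_def by simp_all
        obtain c where c: "c \<in> kQhom ori i j" "a = F i j c"
          using a bij_betw_imp_surj_on[OF Fbij[OF iI jI]] unfolding xi yj by blast
        have fx: "f x w = fscale (lam i * coord (gen M x) w) (gen N x)" for w
          using xL unfolding f_def i_def by simp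
        have fy: "f y w = fscale (lam j * coord (gen M y) w) (gen N y)" for w
          using yL unfolding f_def j_def by simp
        show ?thesis
        proof (cases "P i j")
          case True
          have ae: "a = sc C c (e i j)"
            using c(2) lin_sc[OF Flin[OF iI jI] kQ1[OF True], of c] unfolding e_def by simp
          have ein: "e i j \<in> Hom C x y" using e_in[OF iI jI True] unfolding xi yj .
          have am: "amap C M x y a = c * \<alpha> i j"
            unfolding ae \<alpha>_def using amap_sc[OF BM xL yL ein] unfolding xi yj by simp
          have an: "amap C N x y a = c * \<beta> i j"
            unfolding ae \<beta>_def using amap_sc[OF BN xL yL ein] unfolding xi yj by simp
          define cv where "cv = coord (gen M y) v"
          have L: "f x (Mmap M x y a v) = fscale (lam i * (cv * (c * \<alpha> i j))) (gen N x)"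
            unfolding fx amap_v[OF BM xL yL a v] am cv_def
            using coord_scale[OF conjunct1[OF gen[OF BM xL]]] by simp
          have R: "Mmap N x y a (f y v) = fscale (lam j * cv * (c * \<beta> i j)) (gen N x)"
            unfolding amap_v[OF BN xL yL a fin[OF v]] an
            unfolding fy cv_def using coord_scale[OF conjunct1[OF gen[OF BN yL]]] by simp
          have "lam i * (cv * (c * \<alpha> i j)) = lam j * cv * (c * \<beta> i j)"
            using compat[OF iI jI True] by (simp add: algebra_simps)
          then show ?thesis unfolding L R by (simp only:)
        next
          case False
          have "c = 0" using c(1) kQ0[OF False] by simp
          then have a0: "a = 0" using c(2) F0[OF iI jI] by simp
          have H0: "0 \<in> Hom C x y" using a a0 by simp
          have "Mmap M x y 0 v = 0" by (rule lin_zero[OF mod_lin_a[OF BL_mod[OF BM] v] H0])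
          moreover have "Mmap N x y 0 (f y v) = 0" by (rule lin_zero[OF mod_lin_a[OF BL_mod[OF BN] fin[OF v]] H0])
          ultimately show ?thesis using a0 f0 by simp
        qed
      qed
    qed
  qed
qed


lemma bij_zero: assumes "bij_betw f A B" "0 \<in> A" "0 \<in> B"
  shows "A = {0} \<longleftrightarrow> B = {0}"
proof
  assume "A = {0}"
  then have "B = {f 0}" using bij_betw_imp_surj_on[OF assms(1)] by simp
  then show "B = {0}" using assms(3) by simp
next
  assume B: "B = {0}"
  show "A = {0}"
  proof
    show "A \<subseteq> {0}"
    proof
      fix a assume a: "a \<in> A"
      have "f a \<in> B" "f 0 \<in> B" using bij_betwE[OF assms(1)] a assms(2) by blast+
      then have "f a = f 0" using B by simp
      then show "a \<in> {0}" using bij_betw_imp_inj_on[OF assms(1)] a assms(2) by (simp add: inj_on_def)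
    qed
    show "{0} \<subseteq> A" using assms(2) by simp
  qed
qed

lemma BL_supp: assumes "is_BL C fscale L M" shows "Mob M x = {0} \<longleftrightarrow> x \<notin> L"
proof
  assume z: "Mob M x = {0}"
  show "x \<notin> L"
  proof
    assume xL: "x \<in> L"
    have "gen M x \<in> Mob M x" using gen_in[OF assms xL, of 1] by simp
    then show False using z conjunct1[OF gen[OF assms xL]] by simp
  qed
next
  assume "x \<notin> L" then show "Mob M x = {0}" using assms unfolding is_BL_def by simp
qed

theorem lemma3p2:
  fixes C :: "('k::alg_closed_field, 'o, 'm::ab_group_add) kcat"
    and G :: "('o, 'm) aut set"
    and L :: "'o set"
    and B :: "('o, 'm, nat \<Rightarrow> 'k) kmod"
  assumes "locally_bounded C"
    and "connected_cat C"
    and "aut_group C G"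
    and "acts_freely C G"
    and "is_line C L"
    and "is_BL C fscale L B"
  shows "stab_set G L = stab_mod C fscale G B"
proof -
  have kc: "is_kcat C" using assms(1) unfolding locally_bounded_def by simp
  have agG: "is_aut C g" if "g \<in> G" for g using assms(3) that unfolding aut_group_def by simp
  show ?thesis
  proof
    show "stab_set G L \<subseteq> stab_mod C fscale G B"
    proof
      fix g assume "g \<in> stab_set G L"
      then have g: "g \<in> G" "fst g ` L = L" unfolding stab_set_def by simp_all
      have "is_BL C fscale L (twist C g B)" by (rule twist_BL[OF kc agG[OF g(1)] assms(6) g(2)])
      then have "mod_iso C fscale (twist C g B) B" by (rule BL_unique[OF assms(5) _ assms(6)])
      then show "g \<in> stab_mod C fscale G B" unfolding stab_mod_def using g by simp
    qed
  next
    show "stab_mod C fscale G B \<subseteq> stab_set G L"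
    proof
      fix g assume "g \<in> stab_mod C fscale G B"
      then have g: "g \<in> G" and iso: "mod_iso C fscale (twist C g B) B" unfolding stab_mod_def by simp_all
      define gi where "gi = inv (fst g)"
      have bg: "bij (fst g)" using agG[OF g] unfolding is_aut_def by simp
      have ggi: "fst g (gi x) = x" for x unfolding gi_def by (rule surj_f_inv_f[OF bij_is_surj[OF bg]])
      have gig: "gi (fst g x) = x" for x unfolding gi_def by (rule inv_f_f[OF bij_is_inj[OF bg]])
      obtain f where f: "\<forall>x. bij_betw (f x) (Mob (twist C g B) x) (Mob B x)"
        using iso unfolding mod_iso_def by blast
      have tw: "Mob (twist C g B) x = Mob B (gi x)" for x unfolding twist_def gi_def by simp
      have B0: "0 \<in> Mob B x" for x by (rule fscale_sub(1)[OF mod_sub[OF BL_mod[OF assms(6)]]])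
      have giL: "gi x \<in> L \<longleftrightarrow> x \<in> L" for x
      proof -
        have "Mob B (gi x) = {0} \<longleftrightarrow> Mob B x = {0}"
          using bij_zero[OF f[rule_format, of x, unfolded tw] B0 B0] .
        then show ?thesis using BL_supp[OF assms(6)] by simp
      qed
      have "fst g ` L = L"
      proof
        show "fst g ` L \<subseteq> L"
        proof
          fix y assume "y \<in> fst g ` L"
          then obtain x where "x \<in> L" "y = fst g x" by auto
          then show "y \<in> L" using giL[of y] gig by simp
        qed
        show "L \<subseteq> fst g ` L"
        proof
          fix x assume "x \<in> L"
          then have "gi x \<in> L" using giL by simp
          then show "x \<in> fst g ` L" using ggi[of x] by force
        qed
      qed
      then show "g \<in> stab_set G L" unfolding stab_set_def using g by simp
    qed
  qed
qed

end
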